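(* Let $n_1<n_2<n_3$ be positive integers with $\gcd(n_1,n_2,n_3)=1$ minimally generating a numerical semigroup $S=\langle n_1,n_2,n_3\rangle$ that is not symmetric. Then $c_1>r_{12}+r_{13}$ and $c_3<r_{31}+r_{32}$.
   Context: $S=\{x_1n_1+x_2n_2+x_3n_3 : x_i\in\mathbb N\}$; minimally generated means no $n_i$ lies in the submonoid generated by the other two. With $F=\max(\mathbb Z\setminus S)$, $S$ is symmetric if $x\in\mathbb Z\setminus S$ implies $F-x\in S$. For $\{i,j,k\}=\{1,2,3\}$, $c_i=\min\{c\in\mathbb Z^+ : cn_i\in\langle n_j,n_k\rangle\}$, and $r_{ij},r_{ik}$ are the (for nonsymmetric $S$ unique, positive) integers with $c_in_i=r_{ij}n_j+r_{ik}n_k$. *)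

theory Defs
  imports Main
begin

definition sgen3 :: "nat \<Rightarrow> nat \<Rightarrow> nat \<Rightarrow> nat set" where
  "sgen3 a b c = {x1 * a + x2 * b + x3 * c | x1 x2 x3. True}"

definition sgen2 :: "nat \<Rightarrow> nat \<Rightarrow> nat set" where
  "sgen2 a b = {x1 * a + x2 * b | x1 x2. True}"

definition minimally_generated3 :: "nat \<Rightarrow> nat \<Rightarrow> nat \<Rightarrow> bool" where
  "minimally_generated3 a b c \<longleftrightarrow>
     a \<notin> sgen2 b c \<and> b \<notin> sgen2 a c \<and> c \<notin> sgen2 a b"

definition frob :: "nat set \<Rightarrow> int" where
  "frob S = (GREATEST x::int. x \<notin> int ` S)"

definition symmetric_sg :: "nat set \<Rightarrow> bool" where
  "symmetric_sg S \<longleftrightarrow> (\<forall>x::int. x \<notin> int ` S \<longrightarrow> frob S - x \<in> int ` S)"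

definition cmin :: "nat \<Rightarrow> nat \<Rightarrow> nat \<Rightarrow> nat" where
  "cmin ni nj nk = (LEAST c::nat. 0 < c \<and> c * ni \<in> sgen2 nj nk)"

end

theory Submission
  imports Defs
begin

lemma cmin_pos:
  assumes "0 < nj"
  shows "0 < cmin ni nj nk"
proof -
  have "0 < nj \<and> nj * ni \<in> sgen2 nj nk"
  proof -
    have "nj * ni = ni * nj + 0 * nk" by simp
    thus ?thesis using assms unfolding sgen2_def by blast
  qed
  hence "\<exists>c. 0 < c \<and> c * ni \<in> sgen2 nj nk" by blast
  from LeastI_ex[OF this] show ?thesis unfolding cmin_def by blast
qed

theorem lemma1p3:
  fixes n1 n2 n3 :: nat
  assumes "0 < n1" "n1 < n2" "n2 < n3"
    and "gcd n1 (gcd n2 n3) = 1"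
    and "minimally_generated3 n1 n2 n3"
    and "\<not> symmetric_sg (sgen3 n1 n2 n3)"
  shows "(\<forall>r12 r13 :: nat. cmin n1 n2 n3 * n1 = r12 * n2 + r13 * n3
            \<longrightarrow> cmin n1 n2 n3 > r12 + r13)
       \<and> (\<forall>r31 r32 :: nat. cmin n3 n1 n2 * n3 = r31 * n1 + r32 * n2
            \<longrightarrow> cmin n3 n1 n2 < r31 + r32)"
proof (intro conjI allI impI)
  fix r12 r13 :: nat
  assume h: "cmin n1 n2 n3 * n1 = r12 * n2 + r13 * n3"
  define c where "c = cmin n1 n2 n3"
  have cp: "0 < c" unfolding c_def using assms by (intro cmin_pos) simp
  hence "0 < c * n1" using assms by simp
  hence nz: "r12 + r13 > 0" using h c_def by (cases "r12 + r13") auto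
  have "(r12 + r13) * n1 < r12 * n2 + r13 * n3"
  proof (cases "r12 > 0")
    case True
    hence "r12 * n1 < r12 * n2" using assms by simp
    moreover have "r13 * n1 \<le> r13 * n3" using assms by simp
    ultimately show ?thesis by (simp add: distrib_right add_less_le_mono add_le_less_mono)
  next
    case False
    hence "r13 > 0" using nz by simp
    hence "r13 * n1 < r13 * n3" using assms by simp
    moreover have "r12 * n1 \<le> r12 * n2" using assms by simp
    ultimately show ?thesis by (simp add: distrib_right add_less_le_mono add_le_less_mono)
  qed
  hence "(r12 + r13) * n1 < c * n1" using h c_def by simp
  thus "cmin n1 n2 n3 > r12 + r13" unfolding c_def by (simp add: mult_less_cancel2)
next
  fix r31 r32 :: nat
  assume h: "cmin n3 n1 n2 * n3 = r31 * n1 + r32 * n2"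
  define c where "c = cmin n3 n1 n2"
  have cp: "0 < c" unfolding c_def using assms by (intro cmin_pos) simp
  hence "0 < c * n3" using assms by simp
  hence nz: "r31 + r32 > 0" using h c_def by (cases "r31 + r32") auto
  have "r31 * n1 + r32 * n2 < (r31 + r32) * n3"
  proof (cases "r31 > 0")
    case True
    hence "r31 * n1 < r31 * n3" using assms by simp
    moreover have "r32 * n2 \<le> r32 * n3" using assms by simp
    ultimately show ?thesis by (simp add: distrib_right add_less_le_mono add_le_less_mono)
  next
    case False
    hence "r32 > 0" using nz by simp
    hence "r32 * n2 < r32 * n3" using assms by simp
    moreover have "r31 * n1 \<le> r31 * n3" using assms by simp
    ultimately show ?thesis by (simp add: distrib_right add_less_le_mono add_le_less_mono)
  qed
  hence "c * n3 < (r31 + r32) * n3" using h c_def by simp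
  thus "cmin n3 n1 n2 < r31 + r32" unfolding c_def by (simp add: mult_less_cancel2)
qed

end
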